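(* Let $(a_0,a_2)$ be any one of the four pairs $$\Big(1+\tfrac{i}{2}-\tfrac{\sqrt3}{2},\,-i\Big),\ \Big(1+\tfrac{i}{2}+\tfrac{\sqrt3}{2},\,-i\Big),\ \Big(1-\tfrac{i}{2}-\tfrac{\sqrt3}{2},\,i\Big),\ \Big(1-\tfrac{i}{2}+\tfrac{\sqrt3}{2},\,i\Big).$$ Then the second-order recursion $$z_n = \frac{a_2 z_{n-2} + z_{n-1} + a_0}{z_{n-2}}$$ (that is, $z_n = \frac{-2i z_{n-2}+2z_{n-1}+(2\mp\sqrt3+i)}{2z_{n-2}}$ or $z_n = \frac{2i z_{n-2}+2z_{n-1}+(2\mp\sqrt3-i)}{2z_{n-2}}$) is periodic with period $12$: for the sequence defined from indeterminates $z_1,z_2$ one has $z_{13}=z_1$ and $z_{14}=z_2$ in $\mathbb{C}(z_1,z_2)$, hence $z_{n+12}=z_n$ for all $n\ge1$.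
   Context: Let $z_1,z_2$ be independent indeterminates over $\mathbb{C}$, and define $z_n\in\mathbb{C}(z_1,z_2)$ for $n\ge3$ by the given recursion. A second-order recursion is periodic with period $k$ if all iterates are well-defined elements of $\mathbb{C}(z_1,z_2)$ (no denominator identically zero) and $z_{k+1}=z_1$, $z_{k+2}=z_2$; equivalently every complex sequence satisfying the recursion with no vanishing denominator satisfies $z_{n+k}=z_n$ for all $n$. *)

theory Defs
  imports Complex_Main
begin

definition satisfies_rec :: "complex \<Rightarrow> complex \<Rightarrow> (nat \<Rightarrow> complex) \<Rightarrow> bool" where
  "satisfies_rec a0 a2 z \<longleftrightarrow>
     (\<forall>n\<ge>1. z n \<noteq> 0 \<and> z (n + 2) = (a2 * z n + z (n + 1) + a0) / z n)"

end

theory Submission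
  imports Defs
begin

definition P3 :: "complex \<Rightarrow> complex \<Rightarrow> complex \<Rightarrow> complex \<Rightarrow> complex" where
  "P3 a b x y = (b + y + a*x)"

definition P4 :: "complex \<Rightarrow> complex \<Rightarrow> complex \<Rightarrow> complex \<Rightarrow> complex" where
  "P4 a b x y = (b + y + a*x + b*x + a*x*y)"

definition P5 :: "complex \<Rightarrow> complex \<Rightarrow> complex \<Rightarrow> complex \<Rightarrow> complex" where
  "P5 a b x y = (b + y + a*b*y + a*y^2 + a*x + b*x - x*y + a*x*y + b*x*y)"

definition P6 :: "complex \<Rightarrow> complex \<Rightarrow> complex \<Rightarrow> complex \<Rightarrow> complex" where
  "P6 a b x y = (- 1 + b + 2*a*b + 2*a*b*y + a*y^2 - x + 2*a*b*x - x*y + a*x*y + b*x*y + a*b*x*y - x*y^2 + a*x*y^2 + b*x*y^2 - x^2*y + b*x^2*y + a*b*x^2*y)"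

definition P7 :: "complex \<Rightarrow> complex \<Rightarrow> complex \<Rightarrow> complex \<Rightarrow> complex" where
  "P7 a b x y = (- 1 + b + 2*a*b + a*y + 2*b*y + 2*a*b*y + 3*a*y^2 + 2*b*y^2 - y^3 + a*y^3 + b*y^3 - 2*x + 4*a*b*x - 5*x*y + a*x*y + 2*b*x*y + 6*a*b*x*y - 4*x*y^2 + 3*b*x*y^2 + 4*a*b*x*y^2 - x*y^3 + b*x*y^3 + a*b*x*y^3 - x^2 - a*x^2 - b*x^2 + 2*a*b*x^2 - x^2*y - 2*a*x^2*y - 2*b*x^2*y + 3*a*b*x^2*y - a*x^2*y^2 - b*x^2*y^2 + a*b*x^2*y^2)"

definition P8 :: "complex \<Rightarrow> complex \<Rightarrow> complex \<Rightarrow> complex \<Rightarrow> complex" where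
  "P8 a b x y = (2*a + 4*b - a*b - y + 7*a*y + 14*b*y - 3*y^2 + 9*a*y^2 + 15*b*y^2 + 3*a*b*y^2 - 4*y^3 + 4*a*y^3 + 7*b*y^3 + 3*a*b*y^3 - y^4 + b*y^4 + a*b*y^4 - 4*x + 4*a*x + 9*b*x + 6*a*b*x - 17*x*y + 7*a*x*y + 18*b*x*y + 27*a*b*x*y - 19*x*y^2 - a*x*y^2 + 7*b*x*y^2 + 29*a*b*x*y^2 - 6*x*y^3 - 5*a*x*y^3 - 2*b*x*y^3 + 11*a*b*x*y^3 - a*x*y^4 - b*x*y^4 + a*b*x*y^4 - 6*x^2 - a*x^2 + b*x^2 + 11*a*b*x^2 - 12*x^2*y - 11*a*x^2*y - 12*b*x^2*y + 26*a*b*x^2*y - 3*x^2*y^2 - 11*a*x^2*y^2 - 15*b*x^2*y^2 + 13*a*b*x^2*y^2 + x^2*y^3 - 2*a*x^2*y^3 - 4*b*x^2*y^3 + a*b*x^2*y^3 - x^3 - 2*a*x^3 - 3*b*x^3 + 3*a*b*x^3 + x^3*y - 4*a*x^3*y - 8*b*x^3*y + a*b*x^3*y + x^3*y^2 - a*x^3*y^2 - 3*b*x^3*y^2 - a*b*x^3*y^2)"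

definition P9 :: "complex \<Rightarrow> complex \<Rightarrow> complex \<Rightarrow> complex \<Rightarrow> complex" where
  "P9 a b x y = (8*a + 15*b - 4*a*b - 12*y + 16*a*y + 36*b*y + 15*a*b*y - 22*y^2 + 8*a*y^2 + 24*b*y^2 + 38*a*b*y^2 - 16*y^3 - 2*a*y^3 + 2*b*y^3 + 28*a*b*y^3 - 5*y^4 - 4*a*y^4 - 3*b*y^4 + 9*a*b*y^4 - a*y^5 - b*y^5 + a*b*y^5 - 16*x + 22*a*x + 49*b*x + 19*a*b*x - 64*x*y + 21*a*x*y + 70*b*x*y + 109*a*b*x*y - 76*x*y^2 - 21*a*x*y^2 - 3*b*x*y^2 + 149*a*b*x*y^2 - 37*x*y^3 - 36*a*x*y^3 - 45*b*x*y^3 + 82*a*b*x*y^3 - 5*x*y^4 - 17*a*x*y^4 - 24*b*x*y^4 + 19*a*b*x*y^4 + x*y^5 - 2*a*x*y^5 - 4*b*x*y^5 + a*b*x*y^5 - 33*x^2 + 9*a*x^2 + 33*b*x^2 + 57*a*b*x^2 - 77*x^2*y - 27*a*x^2*y - 12*b*x^2*y + 155*a*b*x^2*y - 55*x^2*y^2 - 75*a*x^2*y^2 - 107*b*x^2*y^2 + 138*a*b*x^2*y^2 - 6*x^2*y^3 - 55*a*x^2*y^3 - 95*b*x^2*y^3 + 44*a*b*x^2*y^3 + 5*x^2*y^4 - 14*a*x^2*y^4 - 30*b*x^2*y^4 + a*b*x^2*y^4 + x^2*y^5 - a*x^2*y^5 - 3*b*x^2*y^5 - a*b*x^2*y^5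 - 17*x^3 - 9*a*x^3 - 8*b*x^3 + 36*a*b*x^3 - 19*x^3*y - 37*a*x^3*y - 58*b*x^3*y + 55*a*b*x^3*y + 6*x^3*y^2 - 42*a*x^3*y^2 - 82*b*x^3*y^2 + 13*a*b*x^3*y^2 + 12*x^3*y^3 - 17*a*x^3*y^3 - 40*b*x^3*y^3 - 13*a*b*x^3*y^3 + 3*x^3*y^4 - 2*a*x^3*y^4 - 6*b*x^3*y^4 - 5*a*b*x^3*y^4 - x^4 - 4*a*x^4 - 7*b*x^4 + 4*a*b*x^4 + 3*x^4*y - 7*a*x^4*y - 15*b*x^4*y - 2*a*b*x^4*y + 6*x^4*y^2 - 3*a*x^4*y^2 - 9*b*x^4*y^2 - 10*a*b*x^4*y^2 + 2*x^4*y^3 - b*x^4*y^3 - 4*a*b*x^4*y^3)"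

definition P10 :: "complex \<Rightarrow> complex \<Rightarrow> complex \<Rightarrow> complex \<Rightarrow> complex" where
  "P10 a b x y = (- 15 + 4*a + 15*b + 26*a*b - 89*y - 11*a*y + 24*b*y + 172*a*b*y - 185*y^2 - 100*a*y^2 - 96*b*y^2 + 396*a*b*y^2 - 175*y^3 - 195*a*y^3 - 280*b*y^3 + 420*a*b*y^3 - 75*y^4 - 175*a*y^4 - 285*b*y^4 + 220*a*b*y^4 - 5*y^5 - 81*a*y^5 - 141*b*y^5 + 51*a*b*y^5 + 6*y^6 - 17*a*y^6 - 34*b*y^6 + a*b*y^6 + y^7 - a*y^7 - 3*b*y^7 - a*b*y^7 - 60*x - 16*a*x + 120*a*b*x - 260*x*y - 208*a*x*y - 259*b*x*y + 588*a*b*x*y - 354*x*y^2 - 635*a*x*y^2 - 1005*b*x*y^2 + 973*a*b*x*y^2 - 133*x*y^3 - 836*a*x*y^3 - 1481*b*x*y^3 + 667*a*b*x*y^3 + 92*x*y^4 - 560*a*x*y^4 - 1084*b*x*y^4 + 122*a*b*x*y^4 + 97*x*y^5 - 196*a*x*y^5 - 419*b*x*y^5 - 73*a*b*x*y^5 + 30*x*y^6 - 33*a*x*y^6 - 81*b*x*y^6 - 38*a*b*x*y^6 + 3*x*y^7 - 2*a*x*y^7 - 6*b*x*y^7 - 5*a*b*x*y^7 - 66*x^2 - 66*a*x^2 - 90*b*x^2 + 156*a*b*x^2 - 150*x^2*y - 435*a*x^2*y - 735*b*x^2*y + 498*a*b*x^2*y + 72*x^2*y^2 - 917*a*x^2*y^2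 - 1746*b*x^2*y^2 + 330*a*b*x^2*y^2 + 417*x^2*y^3 - 883*a*x^2*y^3 - 1863*b*x^2*y^3 - 329*a*b*x^2*y^3 + 407*x^2*y^4 - 425*a*x^2*y^4 - 1007*b*x^2*y^4 - 546*a*b*x^2*y^4 + 172*x^2*y^5 - 97*a*x^2*y^5 - 273*b*x^2*y^5 - 276*a*b*x^2*y^5 + 32*x^2*y^6 - 8*a*x^2*y^6 - 32*b*x^2*y^6 - 58*a*b*x^2*y^6 + 2*x^2*y^7 - b*x^2*y^7 - 4*a*b*x^2*y^7 - 16*x^3 - 60*a*x^3 - 104*b*x^3 + 60*a*b*x^3 + 65*x^3*y - 272*a*x^3*y - 541*b*x^3*y + 15*a*b*x^3*y + 320*x^3*y^2 - 397*a*x^3*y^2 - 903*b*x^3*y^2 - 400*a*b*x^3*y^2 + 429*x^3*y^3 - 230*a*x^3*y^3 - 645*b*x^3*y^3 - 689*a*b*x^3*y^3 + 250*x^3*y^4 - 34*a*x^3*y^4 - 188*b*x^3*y^4 - 453*a*b*x^3*y^4 + 65*x^3*y^5 + 12*a*x^3*y^5 - 9*b*x^3*y^5 - 129*a*b*x^3*y^5 + 6*x^3*y^6 + 3*a*x^3*y^6 + 3*b*x^3*y^6 - 13*a*b*x^3*y^6 + 4*x^4 - 15*a*x^4 - 30*b*x^4 + 46*x^4*y - 44*a*x^4*y - 105*b*x^4*y - 64*a*b*x^4*y + 102*x^4*y^2 - 27*a*x^4*y^2 - 101*b*x^4*y^2 - 177*a*b*x^4*y^2 + 86*x^4*y^3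 + 19*a*x^4*y^3 - 7*b*x^4*y^3 - 170*a*b*x^4*y^3 + 29*x^4*y^4 + 22*a*x^4*y^4 + 27*b*x^4*y^4 - 65*a*b*x^4*y^4 + 3*x^4*y^5 + 5*a*x^4*y^5 + 8*b*x^4*y^5 - 8*a*b*x^4*y^5)"

definition P11 :: "complex \<Rightarrow> complex \<Rightarrow> complex \<Rightarrow> complex \<Rightarrow> complex" where
  "P11 a b x y = (- 153 - 41*a + 306*a*b - 818*y - 537*a*y - 593*b*y + 1795*a*b*y - 1575*y^2 - 2015*a*y^2 - 2973*b*y^2 + 3947*a*b*y^2 - 1246*y^3 - 3570*a*y^3 - 6041*b*y^3 + 4109*a*b*y^3 - 35*y^4 - 3521*a*y^4 - 6552*b*y^4 + 1820*a*b*y^4 + 665*y^5 - 2051*a*y^5 - 4151*b*y^5 - 217*a*b*y^5 + 518*y^6 - 700*a*y^6 - 1561*b*y^6 - 609*a*b*y^6 + 183*y^7 - 127*a*y^7 - 332*b*y^7 - 274*a*b*y^7 + 31*y^8 - 9*a*y^8 - 34*b*y^8 - 54*a*b*y^8 + 2*y^9 - b*y^9 - 4*a*b*y^9 - 575*x - 698*a*x - 1015*b*x + 1422*a*b*x - 1836*x*y - 4960*a*x*y - 8338*b*x*y + 5906*a*b*x*y - 348*x*y^2 - 13069*a*x*y^2 - 24214*b*x*y^2 + 7181*a*b*x*y^2 + 5298*x*y^3 - 17467*a*x*y^3 - 35235*b*x*y^3 - 1159*a*b*x*y^3 + 9157*x*y^4 - 13138*a*x*y^4 - 29076*b*x*y^4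 - 10508*a*b*x*y^4 + 7300*x*y^5 - 5602*a*x*y^5 - 14106*b*x*y^5 - 10793*a*b*x*y^5 + 3253*x*y^6 - 1201*a*x*y^6 - 3890*b*x*y^6 - 5461*a*b*x*y^6 + 824*x*y^7 - 51*a*x*y^7 - 517*b*x*y^7 - 1520*a*b*x*y^7 + 110*x*y^8 + 24*a*x*y^8 - 10*b*x*y^8 - 221*a*b*x*y^8 + 6*x*y^9 + 3*a*x*y^9 + 3*b*x*y^9 - 13*a*b*x*y^9 - 104*x^2 - 2180*a*x^2 - 4016*b*x^2 + 1284*a*b*x^2 + 3561*x^2*y - 11480*a*x^2*y - 23202*b*x^2*y - 906*a*b*x^2*y + 16417*x^2*y^2 - 22519*a*x^2*y^2 - 50223*b*x^2*y^2 - 19375*a*b*x^2*y^2 + 29411*x^2*y^3 - 21200*a*x^2*y^3 - 54257*b*x^2*y^3 - 44263*a*b*x^2*y^3 + 27883*x^2*y^4 - 9191*a*x^2*y^4 - 31118*b*x^2*y^4 - 47405*a*b*x^2*y^4 + 15356*x^2*y^5 - 329*a*x^2*y^5 - 8339*b*x^2*y^5 - 28502*a*b*x^2*y^5 + 4992*x^2*y^6 + 1356*a*x^2*y^6 + 25*b*x^2*y^6 - 10029*a*b*x^2*y^6 + 923*x^2*y^7 + 550*a*x^2*y^7 + 576*b*x^2*y^7 - 2009*a*b*x^2*y^7 + 87*x^2*y^8 + 88*a*x^2*y^8 + 124*b*x^2*y^8 - 206*a*b*x^2*y^8 + 3*x^2*y^9 + 5*a*x^2*y^9 + 8*b*x^2*y^9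 - 8*a*b*x^2*y^9 + 1680*x^3 - 2350*a*x^3 - 5225*b*x^3 - 1960*a*b*x^3 + 12350*x^3*y - 8266*a*x^3*y - 21598*b*x^3*y - 18911*a*b*x^3*y + 30882*x^3*y^2 - 8207*a*x^3*y^2 - 30759*b*x^3*y^2 - 53513*a*b*x^3*y^2 + 37986*x^3*y^3 + 2031*a*x^3*y^3 - 15233*b*x^3*y^3 - 71896*a*b*x^3*y^3 + 25899*x^3*y^4 + 9604*a*x^3*y^4 + 4947*b*x^3*y^4 - 53174*a*b*x^3*y^4 + 10032*x^3*y^5 + 7577*a*x^3*y^5 + 9151*b*x^3*y^5 - 22551*a*b*x^3*y^5 + 2104*x^3*y^6 + 2811*a*x^3*y^6 + 4223*b*x^3*y^6 - 5330*a*b*x^3*y^6 + 200*x^3*y^7 + 514*a*x^3*y^7 + 864*b*x^3*y^7 - 623*a*b*x^3*y^7 + 4*x^3*y^8 + 37*a*x^3*y^8 + 67*b*x^3*y^8 - 25*a*b*x^3*y^8 + 2200*x^4 - 560*a*x^4 - 2145*b*x^4 - 3825*a*b*x^4 + 10698*x^4*y + 1302*a*x^4*y - 2922*b*x^4*y - 20613*a*b*x^4*y + 19022*x^4*y^2 + 9231*a*x^4*y^2 + 7707*b*x^4*y^2 - 40120*a*b*x^4*y^2 + 16216*x^4*y^3 + 15517*a*x^4*y^3 + 20859*b*x^4*y^3 - 38042*a*b*x^4*y^3 + 6803*x^4*y^4 + 12258*a*x^4*y^4 + 19508*b*x^4*y^4 - 18824*a*b*x^4*y^4 + 1096*x^4*y^5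 + 5062*a*x^4*y^5 + 8912*b*x^4*y^5 - 4553*a*b*x^4*y^5 - 79*x^4*y^6 + 1049*a*x^4*y^6 + 1993*b*x^4*y^6 - 367*a*b*x^4*y^6 - 32*x^4*y^7 + 85*a*x^4*y^7 + 173*b*x^4*y^7 + 18*a*b*x^4*y^7 + 938*x^5 + 499*a*x^5 + 462*b*x^5 - 2000*a*b*x^5 + 2954*x^5*y + 3492*a*x^5*y + 5040*b*x^5*y - 7260*a*b*x^5*y + 2896*x^5*y^2 + 7456*a*x^5*y^2 + 12472*b*x^5*y^2 - 9132*a*b*x^5*y^2 + 424*x^5*y^3 + 7270*a*x^5*y^3 + 13360*b*x^5*y^3 - 4415*a*b*x^5*y^3 - 893*x^5*y^4 + 3547*a*x^5*y^4 + 7059*b*x^5*y^4 - 96*a*b*x^5*y^4 - 504*x^5*y^5 + 823*a*x^5*y^5 + 1781*b*x^5*y^5 + 530*a*b*x^5*y^5 - 79*x^5*y^6 + 69*a*x^5*y^6 + 167*b*x^5*y^6 + 112*a*b*x^5*y^6 + 82*x^6 + 262*a*x^6 + 448*b*x^6 - 284*a*b*x^6 - 91*x^6*y + 1043*a*x^6*y + 1992*b*x^6*y - 351*a*b*x^6*y - 646*x^6*y^2 + 1438*a*x^6*y^2 + 3005*b*x^6*y^2 + 488*a*b*x^6*y^2 - 774*x^6*y^3 + 852*a*x^6*y^3 + 1974*b*x^6*y^3 + 1018*a*b*x^6*y^3 - 353*x^6*y^4 + 204*a*x^6*y^4 + 556*b*x^6*y^4 + 555*a*b*x^6*y^4 -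 55*x^6*y^5 + 12*a*x^6*y^5 + 50*b*x^6*y^5 + 96*a*b*x^6*y^5 - 15*x^7 + 26*a*x^7 + 56*b*x^7 + 15*a*b*x^7 - 78*x^7*y + 59*a*x^7*y + 149*b*x^7*y + 116*a*b*x^7*y - 114*x^7*y^2 + 37*a*x^7*y^2 + 126*b*x^7*y^2 + 194*a*b*x^7*y^2 - 62*x^7*y^3 + a*x^7*y^3 + 33*b*x^7*y^3 + 115*a*b*x^7*y^3 - 11*x^7*y^4 - 3*a*x^7*y^4 + 22*a*b*x^7*y^4)"

definition PM12 :: "complex \<Rightarrow> complex \<Rightarrow> complex \<Rightarrow> complex \<Rightarrow> complex" where
  "PM12 a b x y = (- 15 + 4*a + 15*b + 26*a*b - 32*y + 16*b*y + 60*a*b*y - 24*y^2 - 6*a*y^2 + 48*a*b*y^2 - 8*y^3 - 4*a*y^3 - 4*b*y^3 + 16*a*b*y^3 - y^4 - a*y^4 - b*y^4 + 2*a*b*y^4 - 57*x - 19*a*x - 7*b*x + 116*a*b*x - 105*x*y - 64*a*x*y - 68*b*x*y + 228*a*b*x*y - 69*x*y^2 - 66*a*x*y^2 - 90*b*x*y^2 + 159*a*b*x*y^2 - 19*x*y^3 - 29*a*x*y^3 - 42*b*x*y^3 + 47*a*b*x*y^3 - x*y^4 - 5*a*x*y^4 - 7*b*x*y^4 + 5*a*b*x*y^4 - 55*x^2 - 73*a*x^2 - 109*b*x^2 + 139*a*b*x^2 - 82*x^2*y - 164*a*x^2*y - 265*b*x^2*y + 233*a*b*x^2*y - 36*x^2*y^2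 - 132*a*x^2*y^2 - 224*b*x^2*y^2 + 131*a*b*x^2*y^2 - x^2*y^3 - 45*a*x^2*y^3 - 79*b*x^2*y^3 + 27*a*b*x^2*y^3 + 2*x^2*y^4 - 5*a*x^2*y^4 - 10*b*x^2*y^4 + a*b*x^2*y^4 - x^3 - 69*a*x^3 - 128*b*x^3 + 36*a*b*x^3 + 16*x^3*y - 131*a*x^3*y - 250*b*x^3*y + 36*a*b*x^3*y + 26*x^3*y^2 - 84*a*x^3*y^2 - 168*b*x^3*y^2 - 2*a*b*x^3*y^2 + 11*x^3*y^3 - 19*a*x^3*y^3 - 43*b*x^3*y^3 - 8*a*b*x^3*y^3 + x^3*y^4 - a*x^3*y^4 - 3*b*x^3*y^4 - a*b*x^3*y^4 + 16*x^4 - 21*a*x^4 - 47*b*x^4 - 19*a*b*x^4 + 31*x^4*y - 33*a*x^4*y - 78*b*x^4*y - 40*a*b*x^4*y + 18*x^4*y^2 - 15*a*x^4*y^2 - 39*b*x^4*y^2 - 26*a*b*x^4*y^2 + 3*x^4*y^3 - 2*a*x^4*y^3 - 6*b*x^4*y^3 - 5*a*b*x^4*y^3 + 4*x^5 - a*x^5 - 4*b*x^5 - 7*a*b*x^5 + 6*x^5*y - a*x^5*y - 5*b*x^5*y - 11*a*b*x^5*y + 2*x^5*y^2 - b*x^5*y^2 - 4*a*b*x^5*y^2)"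

lemma rec3:
  assumes "a^2 = -1" "b^2 = (2-a)*b + a"
  shows "(P3 a b x y) = a * x * 1 + y * 1 + b * 1 * 1 * 1"
  using assms unfolding P3_def by (algebra | simp add: algebra_simps)

lemma rec4:
  assumes "a^2 = -1" "b^2 = (2-a)*b + a"
  shows "(P4 a b x y) = a * y * x + (P3 a b x y) * 1 + b * x * 1 * 1"
  using assms unfolding P3_def P4_def by (algebra | simp add: algebra_simps)

lemma rec5:
  assumes "a^2 = -1" "b^2 = (2-a)*b + a"
  shows "(P5 a b x y) = a * (P3 a b x y) * y + (P4 a b x y) * 1 + b * y * x * 1"
  using assms unfolding P3_def P4_def P5_def by (algebra | simp add: algebra_simps)

lemma rec6:
  assumes "a^2 = -1" "b^2 = (2-a)*b + a"
  shows "(P6 a b x y) = a * (P4 a b x y) * (P3 a b x y) + (P5 a b x y) * x + b * (P3 a b x y) * y * x"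
  using assms unfolding P3_def P4_def P5_def P6_def by (algebra | simp add: algebra_simps)

lemma rec7:
  assumes "a^2 = -1" "b^2 = (2-a)*b + a"
  shows "(P7 a b x y) = a * (P5 a b x y) * (P4 a b x y) + (P6 a b x y) * y + b * (P4 a b x y) * (P3 a b x y) * y"
  using assms unfolding P3_def P4_def P5_def P6_def P7_def by (algebra | simp add: algebra_simps)

lemma rec8:
  assumes "a^2 = -1" "b^2 = (2-a)*b + a"
  shows "(P8 a b x y) = a * (P6 a b x y) * (P5 a b x y) + (P7 a b x y) * (P3 a b x y) + b * (P5 a b x y) * (P4 a b x y) * (P3 a b x y)"
  using assms unfolding P3_def P4_def P5_def P6_def P7_def P8_def by (algebra | simp add: algebra_simps)

lemma rec9:
  assumes "a^2 = -1" "b^2 = (2-a)*b + a"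
  shows "(P9 a b x y) = a * (P7 a b x y) * (P6 a b x y) + (P8 a b x y) * (P4 a b x y) + b * (P6 a b x y) * (P5 a b x y) * (P4 a b x y)"
  using assms unfolding P4_def P5_def P6_def P7_def P8_def P9_def by (algebra | simp add: algebra_simps)

lemma rec10:
  assumes "a^2 = -1" "b^2 = (2-a)*b + a"
  shows "(P10 a b x y) = a * (P8 a b x y) * (P7 a b x y) + (P9 a b x y) * (P5 a b x y) + b * (P7 a b x y) * (P6 a b x y) * (P5 a b x y)"
  using assms unfolding P5_def P6_def P7_def P8_def P9_def P10_def by (algebra | simp add: algebra_simps)

lemma rec11:
  assumes "a^2 = -1" "b^2 = (2-a)*b + a"
  shows "(P11 a b x y) = a * (P9 a b x y) * (P8 a b x y) + (P10 a b x y) * (P6 a b x y) + b * (P8 a b x y) * (P7 a b x y) * (P6 a b x y)"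
  using assms unfolding P6_def P7_def P8_def P9_def P10_def P11_def by (algebra | simp add: algebra_simps)

lemma recM12:
  assumes "a^2 = -1" "b^2 = (2-a)*b + a"
  shows "P10 a b x y * PM12 a b x y = a * P10 a b x y * P9 a b x y + P11 a b x y * P7 a b x y + b * P9 a b x y * P8 a b x y * P7 a b x y"
  using assms unfolding P10_def PM12_def P9_def P11_def P7_def P8_def by (algebra | simp add: algebra_simps)

lemma recFin:
  assumes "a^2 = -1" "b^2 = (2-a)*b + a"
  shows "a * P11 a b x y + PM12 a b x y * P8 a b x y + b * P9 a b x y * P8 a b x y = x * P11 a b x y"
  using assms unfolding P11_def PM12_def P9_def P8_def by (algebra | simp add: algebra_simps)


lemma step:
  fixes p q r s u v wj wk a b wn :: complex
  assumes "p \<noteq> 0" "q \<noteq> 0" "r \<noteq> 0" "wj = s/(q*p)" "wk = u/(r*q)" "wj \<noteq> 0"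
    "v = a*s*r + u*p + b*r*q*p" "wn = (a*wj + wk + b)/wj"
  shows "wn = v/(s*r)" "s \<noteq> 0"
proof -
  show s: "s \<noteq> 0" using assms(4,6) by auto
  have "wn = (a*(s/(q*p)) + u/(r*q) + b)/(s/(q*p))" using assms(4,5,8) by simp
  also have "\<dots> = v/(s*r)" using assms(1,2,3) s by (simp add: field_simps assms(7))
  finally show "wn = v/(s*r)" .
qed

lemma stepM:
  fixes p q r s u M wj wk a b wn :: complex
  assumes "p \<noteq> 0" "q \<noteq> 0" "r \<noteq> 0" "s \<noteq> 0" "wj = s/(q*p)" "wk = u/(r*q)"
    "s*M = a*s*r + u*p + b*r*q*p" "wn = (a*wj + wk + b)/wj"
  shows "wn = M/r"
proof -
  have "wn = (a*(s/(q*p)) + u/(r*q) + b)/(s/(q*p))" using assms(5,6,8) by simp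
  also have "\<dots> = (a*s*r + u*p + b*r*q*p)/(s*r)" using assms(1-4) by (simp add: field_simps)
  also have "\<dots> = M/r" using assms(4,3) by (simp add: assms(7)[symmetric])
  finally show ?thesis .
qed

lemma stepF:
  fixes q r s M x wj wk a b wn :: complex
  assumes "q \<noteq> 0" "r \<noteq> 0" "s \<noteq> 0" "wj = s/(r*q)" "wk = M/r"
    "a*s + M*q + b*r*q = x*s" "wn = (a*wj + wk + b)/wj"
  shows "wn = x"
proof -
  have "wn = (a*(s/(r*q)) + M/r + b)/(s/(r*q))" using assms(4,5,7) by simp
  also have "\<dots> = (a*s + M*q + b*r*q)/s" using assms(1-3) by (simp add: field_simps)
  also have "\<dots> = x" using assms(3) by (simp add: assms(6))
  finally show ?thesis .
qed

lemma core:
  fixes w :: "nat \<Rightarrow> complex" and a b :: complex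
  assumes ha: "a^2 = -1" and hb: "b^2 = (2-a)*b + a"
    and hnz: "\<And>j. j \<le> 12 \<Longrightarrow> w j \<noteq> 0"
    and hrec: "\<And>j. j \<le> 10 \<Longrightarrow> w (j+2) = (a * w j + w (j+1) + b) / w j"
  shows "w 12 = w 0"
proof -
  define x where "x = w 0"
  define y where "y = w 1"
  have T: "(1::complex) \<noteq> 0" by simp
  have w0: "w 0 = x / (1*1)" by (simp add: x_def)
  have w1: "w 1 = y / (1*1)" by (simp add: y_def)
  have hn0: "w 0 \<noteq> 0" by (rule hnz) simp
  have hr0: "w 2 = (a * w 0 + w 1 + b) / w 0" using hrec[of 0] by (simp add: eval_nat_numeral)
  have hn1: "w 1 \<noteq> 0" by (rule hnz) simp
  have hr1: "w 3 = (a * w 1 + w 2 + b) / w 1" using hrec[of 1] by (simp add: eval_nat_numeral)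
  have hn2: "w 2 \<noteq> 0" by (rule hnz) simp
  have hr2: "w 4 = (a * w 2 + w 3 + b) / w 2" using hrec[of 2] by (simp add: eval_nat_numeral)
  have hn3: "w 3 \<noteq> 0" by (rule hnz) simp
  have hr3: "w 5 = (a * w 3 + w 4 + b) / w 3" using hrec[of 3] by (simp add: eval_nat_numeral)
  have hn4: "w 4 \<noteq> 0" by (rule hnz) simp
  have hr4: "w 6 = (a * w 4 + w 5 + b) / w 4" using hrec[of 4] by (simp add: eval_nat_numeral)
  have hn5: "w 5 \<noteq> 0" by (rule hnz) simp
  have hr5: "w 7 = (a * w 5 + w 6 + b) / w 5" using hrec[of 5] by (simp add: eval_nat_numeral)
  have hn6: "w 6 \<noteq> 0" by (rule hnz) simp
  have hr6: "w 8 = (a * w 6 + w 7 + b) / w 6" using hrec[of 6] by (simp add: eval_nat_numeral)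
  have hn7: "w 7 \<noteq> 0" by (rule hnz) simp
  have hr7: "w 9 = (a * w 7 + w 8 + b) / w 7" using hrec[of 7] by (simp add: eval_nat_numeral)
  have hn8: "w 8 \<noteq> 0" by (rule hnz) simp
  have hr8: "w 10 = (a * w 8 + w 9 + b) / w 8" using hrec[of 8] by (simp add: eval_nat_numeral)
  have hn9: "w 9 \<noteq> 0" by (rule hnz) simp
  have hr9: "w 11 = (a * w 9 + w 10 + b) / w 9" using hrec[of 9] by (simp add: eval_nat_numeral)
  have hn10: "w 10 \<noteq> 0" by (rule hnz) simp
  have hr10: "w 12 = (a * w 10 + w 11 + b) / w 10" using hrec[of 10] by (simp add: eval_nat_numeral)
  note S0 = step[where p="1" and q="1" and r="1" and wj="w 0" and s="x" and wk="w 1" and u="y" and a=a and v="(P3 a b x y)" and b=b and wn="w 2",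
    OF T T T w0 w1 hn0 rec3[OF ha hb] hr0]
  note w2 = S0(1) and nzP1 = S0(2)
  note S1 = step[where p="1" and q="1" and r="x" and wj="w 1" and s="y" and wk="w 2" and u="(P3 a b x y)" and a=a and v="(P4 a b x y)" and b=b and wn="w 3",
    OF T T nzP1 w1 w2 hn1 rec4[OF ha hb] hr1]
  note w3 = S1(1) and nzP2 = S1(2)
  note S2 = step[where p="1" and q="x" and r="y" and wj="w 2" and s="(P3 a b x y)" and wk="w 3" and u="(P4 a b x y)" and a=a and v="(P5 a b x y)" and b=b and wn="w 4",
    OF T nzP1 nzP2 w2 w3 hn2 rec5[OF ha hb] hr2]
  note w4 = S2(1) and nzP3 = S2(2)
  note S3 = step[where p="x" and q="y" and r="(P3 a b x y)" and wj="w 3" and s="(P4 a b x y)" and wk="w 4" and u="(P5 a b x y)" and a=a and v="(P6 a b x y)" and b=b and wn="w 5",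
    OF nzP1 nzP2 nzP3 w3 w4 hn3 rec6[OF ha hb] hr3]
  note w5 = S3(1) and nzP4 = S3(2)
  note S4 = step[where p="y" and q="(P3 a b x y)" and r="(P4 a b x y)" and wj="w 4" and s="(P5 a b x y)" and wk="w 5" and u="(P6 a b x y)" and a=a and v="(P7 a b x y)" and b=b and wn="w 6",
    OF nzP2 nzP3 nzP4 w4 w5 hn4 rec7[OF ha hb] hr4]
  note w6 = S4(1) and nzP5 = S4(2)
  note S5 = step[where p="(P3 a b x y)" and q="(P4 a b x y)" and r="(P5 a b x y)" and wj="w 5" and s="(P6 a b x y)" and wk="w 6" and u="(P7 a b x y)" and a=a and v="(P8 a b x y)" and b=b and wn="w 7",
    OF nzP3 nzP4 nzP5 w5 w6 hn5 rec8[OF ha hb] hr5]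
  note w7 = S5(1) and nzP6 = S5(2)
  note S6 = step[where p="(P4 a b x y)" and q="(P5 a b x y)" and r="(P6 a b x y)" and wj="w 6" and s="(P7 a b x y)" and wk="w 7" and u="(P8 a b x y)" and a=a and v="(P9 a b x y)" and b=b and wn="w 8",
    OF nzP4 nzP5 nzP6 w6 w7 hn6 rec9[OF ha hb] hr6]
  note w8 = S6(1) and nzP7 = S6(2)
  note S7 = step[where p="(P5 a b x y)" and q="(P6 a b x y)" and r="(P7 a b x y)" and wj="w 7" and s="(P8 a b x y)" and wk="w 8" and u="(P9 a b x y)" and a=a and v="(P10 a b x y)" and b=b and wn="w 9",
    OF nzP5 nzP6 nzP7 w7 w8 hn7 rec10[OF ha hb] hr7]
  note w9 = S7(1) and nzP8 = S7(2)
  note S8 = step[where p="(P6 a b x y)" and q="(P7 a b x y)" and r="(P8 a b x y)" and wj="w 8" and s="(P9 a b x y)" and wk="w 9" and u="(P10 a b x y)" and a=a and v="(P11 a b x y)" and b=b and wn="w 10",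
    OF nzP6 nzP7 nzP8 w8 w9 hn8 rec11[OF ha hb] hr8]
  note w10 = S8(1) and nzP9 = S8(2)
  have nzP10: "P10 a b x y \<noteq> 0" using w9 hn9 by auto
  have nzP11: "P11 a b x y \<noteq> 0" using w10 hn10 by auto
  have w11: "w 11 = PM12 a b x y / P9 a b x y"
    by (rule stepM[where p="P7 a b x y" and q="P8 a b x y" and r="P9 a b x y" and s="P10 a b x y" and wj="w 9" and u="P11 a b x y" and wk="w 10" and M="PM12 a b x y" and a=a and b=b and wn="w 11",
      OF nzP7 nzP8 nzP9 nzP10 w9 w10 recM12[OF ha hb] hr9])
  have "w 12 = x"
    by (rule stepF[where q="P8 a b x y" and r="P9 a b x y" and s="P11 a b x y" and wj="w 10" and wk="w 11" and M="PM12 a b x y" and a=a and b=b and x=x and wn="w 12",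
      OF nzP8 nzP9 nzP11 w10 w11 recFin[OF ha hb] hr10])

  then show ?thesis by (simp add: x_def)
qed

lemma params:
  fixes a0 a2 :: complex
  assumes "(a0, a2) \<in>
     {(1 + \<i>/2 - complex_of_real (sqrt 3)/2, -\<i>),
      (1 + \<i>/2 + complex_of_real (sqrt 3)/2, -\<i>),
      (1 - \<i>/2 - complex_of_real (sqrt 3)/2, \<i>),
      (1 - \<i>/2 + complex_of_real (sqrt 3)/2, \<i>)}"
  shows "a2^2 = -1 \<and> a0^2 = (2-a2)*a0 + a2"
proof -
  define s where "s = complex_of_real (sqrt 3)"
  have s2: "s^2 = 3" unfolding s_def by (simp flip: of_real_power)
  have i2: "\<i>^2 = (-1::complex)" by simp
  from assms have "(a0 = 1 + \<i>/2 - s/2 \<and> a2 = -\<i>) \<or> (a0 = 1 + \<i>/2 + s/2 \<and> a2 = -\<i>) \<or>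
     (a0 = 1 - \<i>/2 - s/2 \<and> a2 = \<i>) \<or> (a0 = 1 - \<i>/2 + s/2 \<and> a2 = \<i>)"
    unfolding s_def by auto
  then show ?thesis
  proof (elim disjE conjE)
    assume h: "a0 = 1 + \<i>/2 - s/2" "a2 = -\<i>"
    show ?thesis unfolding h using s2 i2 by (simp add: power2_eq_square field_simps, (algebra)?)
  next
    assume h: "a0 = 1 + \<i>/2 + s/2" "a2 = -\<i>"
    show ?thesis unfolding h using s2 i2 by (simp add: power2_eq_square field_simps, (algebra)?)
  next
    assume h: "a0 = 1 - \<i>/2 - s/2" "a2 = \<i>"
    show ?thesis unfolding h using s2 i2 by (simp add: power2_eq_square field_simps, (algebra)?)
  next
    assume h: "a0 = 1 - \<i>/2 + s/2" "a2 = \<i>"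
    show ?thesis unfolding h using s2 i2 by (simp add: power2_eq_square field_simps, (algebra)?)
  qed
qed

theorem mainTheorem2:
  fixes a0 a2 :: complex and z :: "nat \<Rightarrow> complex"
  assumes "(a0, a2) \<in>
     {(1 + \<i>/2 - complex_of_real (sqrt 3)/2, -\<i>),
      (1 + \<i>/2 + complex_of_real (sqrt 3)/2, -\<i>),
      (1 - \<i>/2 - complex_of_real (sqrt 3)/2, \<i>),
      (1 - \<i>/2 + complex_of_real (sqrt 3)/2, \<i>)}"
    and "satisfies_rec a0 a2 z"
  shows "\<forall>n\<ge>1. z (n + 12) = z n"
proof (intro allI impI)
  fix n :: nat assume n: "n \<ge> 1"
  have p: "a2^2 = -1" "a0^2 = (2-a2)*a0 + a2" using params[OF assms(1)] by auto
  have sr: "\<And>m. m \<ge> 1 \<Longrightarrow> z m \<noteq> 0 \<and> z (m + 2) = (a2 * z m + z (m + 1) + a0) / z m"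
    using assms(2) unfolding satisfies_rec_def by blast
  have "(\<lambda>j. z (n + j)) 12 = (\<lambda>j. z (n + j)) 0"
  proof (rule core[OF p])
    fix j :: nat
    show "z (n + j) \<noteq> 0" using sr[of "n+j"] n by auto
    show "z (n + (j + 2)) = (a2 * z (n + j) + z (n + (j + 1)) + a0) / z (n + j)"
      using sr[of "n+j"] n by (simp add: add.assoc)
  qed
  then show "z (n + 12) = z n" by simp
qed

end
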